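(* For every $n\ge0$, the simplex $\mathbf{\Delta}^n$ is cofibrant in the Thomason model structure on $\mathbf{Cpx}$.
   Context: A simplicial complex consists of a vertex set and a collection of nonempty finite subsets (simplices) containing all singletons and closed under nonempty subsets; maps are vertex functions preserving simplices; $\mathbf{Cpx}$ is the category. $\mathbf{\Delta}^n$ is the complex on $\{0,\dots,n\}$ in which every nonempty subset is a simplex. $\mathrm{Sing}(K)_n=\mathbf{Cpx}(\mathbf{\Delta}^n,K)$ with simplicial operators by precomposition; $\mathrm{Ex}$ is the right adjoint of barycentric subdivision of simplicial sets. Thomason model structure on $\mathbf{Cpx}$: $f$ is a weak equivalence iff $\mathrm{Sing}(f)$ is a weak homotopy equivalence, a fibration iff $\mathrm{Ex}^2\mathrm{Sing}(f)$ is a Kan fibration, and a cofibration iff it has the left lifting property against all trivial fibrations; cofibrant means the map from the empty complex is a cofibration. *)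

theory Defs
  imports "HOL-Homology.Homology"
begin

type_synonym 'a cpx = "'a set \<times> 'a set set"

definition cverts :: "'a cpx \<Rightarrow> 'a set" where "cverts K = fst K"
definition csimps :: "'a cpx \<Rightarrow> 'a set set" where "csimps K = snd K"

definition simplicial_complex :: "'a cpx \<Rightarrow> bool" where
  "simplicial_complex K \<longleftrightarrow>
     (\<forall>s\<in>csimps K. s \<noteq> {} \<and> finite s \<and> s \<subseteq> cverts K) \<and>
     (\<forall>v\<in>cverts K. {v} \<in> csimps K) \<and>
     (\<forall>s\<in>csimps K. \<forall>t. t \<subseteq> s \<and> t \<noteq> {} \<longrightarrow> t \<in> csimps K)"

text \<open>Maps of simplicial complexes: vertex functions preserving simplices
  (only their values on the vertex set matter).\<close>
definition cpx_map :: "'a cpx \<Rightarrow> 'b cpx \<Rightarrow> ('a \<Rightarrow> 'b) \<Rightarrow> bool" where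
  "cpx_map K L f \<longleftrightarrow>
     (\<forall>v\<in>cverts K. f v \<in> cverts L) \<and> (\<forall>s\<in>csimps K. f ` s \<in> csimps L)"

definition cpx_simplex :: "nat \<Rightarrow> nat cpx" where
  "cpx_simplex n = ({0..n}, {s. s \<noteq> {} \<and> s \<subseteq> {0..n}})"

definition empty_cpx :: "'a cpx" where "empty_cpx = ({}, {})"

definition simp_op :: "nat \<Rightarrow> nat \<Rightarrow> (nat \<Rightarrow> nat) \<Rightarrow> bool" where
  "simp_op m n \<theta> \<longleftrightarrow> (\<forall>i\<le>m. \<theta> i \<le> n) \<and> (\<forall>i j. i \<le> j \<and> j \<le> m \<longrightarrow> \<theta> i \<le> \<theta> j)
                     \<and> (\<forall>i>m. \<theta> i = 0)"

definition op_comp :: "nat \<Rightarrow> (nat \<Rightarrow> nat) \<Rightarrow> (nat \<Rightarrow> nat) \<Rightarrow> (nat \<Rightarrow> nat)" where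
  "op_comp l \<theta> \<phi> = (\<lambda>i. if i \<le> l then \<theta> (\<phi> i) else 0)"

definition op_id :: "nat \<Rightarrow> nat \<Rightarrow> nat" where
  "op_id n = (\<lambda>i. if i \<le> n then i else 0)"

text \<open>A simplicial set: sets of n-simplices and, for \<theta> : [m] \<rightarrow> [n], the
  operator X_n \<rightarrow> X_m written act m n \<theta>.\<close>
record 'x sset =
  sset_set :: "nat \<Rightarrow> 'x set"
  sset_act :: "nat \<Rightarrow> nat \<Rightarrow> (nat \<Rightarrow> nat) \<Rightarrow> 'x \<Rightarrow> 'x"

definition is_sset :: "'x sset \<Rightarrow> bool" where
  "is_sset X \<longleftrightarrow>
    (\<forall>m n \<theta> x. simp_op m n \<theta> \<and> x \<in> sset_set X n \<longrightarrow> sset_act X m n \<theta> x \<in> sset_set X m) \<and>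
    (\<forall>n x. x \<in> sset_set X n \<longrightarrow> sset_act X n n (op_id n) x = x) \<and>
    (\<forall>l m n \<phi> \<theta> x. simp_op l m \<phi> \<and> simp_op m n \<theta> \<and> x \<in> sset_set X n \<longrightarrow>
        sset_act X l m \<phi> (sset_act X m n \<theta> x) = sset_act X l n (op_comp l \<theta> \<phi>) x)"

definition sset_map :: "'x sset \<Rightarrow> 'y sset \<Rightarrow> (nat \<Rightarrow> 'x \<Rightarrow> 'y) \<Rightarrow> bool" where
  "sset_map X Y f \<longleftrightarrow>
    (\<forall>n x. x \<in> sset_set X n \<longrightarrow> f n x \<in> sset_set Y n) \<and>
    (\<forall>m n \<theta> x. simp_op m n \<theta> \<and> x \<in> sset_set X n \<longrightarrow>
        f m (sset_act X m n \<theta> x) = sset_act Y m n \<theta> (f n x))"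

definition std_sset :: "nat \<Rightarrow> (nat \<Rightarrow> nat) sset" where
  "std_sset n = \<lparr> sset_set = (\<lambda>m. {\<theta>. simp_op m n \<theta>}),
                  sset_act = (\<lambda>l m \<phi> \<theta>. op_comp l \<theta> \<phi>) \<rparr>"

definition horn_sset :: "nat \<Rightarrow> nat \<Rightarrow> (nat \<Rightarrow> nat) sset" where
  "horn_sset n k = \<lparr> sset_set = (\<lambda>m. {\<theta>. simp_op m n \<theta> \<and>
                                         (\<exists>j\<le>n. j \<noteq> k \<and> j \<notin> \<theta> ` {0..m})}),
                     sset_act = (\<lambda>l m \<phi> \<theta>. op_comp l \<theta> \<phi>) \<rparr>"

definition kan_fibration :: "'x sset \<Rightarrow> 'y sset \<Rightarrow> (nat \<Rightarrow> 'x \<Rightarrow> 'y) \<Rightarrow> bool" where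
  "kan_fibration X Y p \<longleftrightarrow> sset_map X Y p \<and>
    (\<forall>n k a b. 1 \<le> n \<and> k \<le> n \<and> sset_map (horn_sset n k) X a \<and> sset_map (std_sset n) Y b \<and>
       (\<forall>m \<theta>. \<theta> \<in> sset_set (horn_sset n k) m \<longrightarrow> p m (a m \<theta>) = b m \<theta>) \<longrightarrow>
       (\<exists>h. sset_map (std_sset n) X h \<and>
            (\<forall>m \<theta>. \<theta> \<in> sset_set (horn_sset n k) m \<longrightarrow> h m \<theta> = a m \<theta>) \<and>
            (\<forall>m \<theta>. \<theta> \<in> sset_set (std_sset n) m \<longrightarrow> p m (h m \<theta>) = b m \<theta>)))"

definition Sing :: "'a cpx \<Rightarrow> (nat \<Rightarrow> 'a) sset" where
  "Sing K = \<lparr> sset_set = (\<lambda>n. {\<sigma>. cpx_map (cpx_simplex n) K \<sigma> \<and> (\<forall>i>n. \<sigma> i = undefined)}),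
              sset_act = (\<lambda>m n \<theta> \<sigma>. (\<lambda>i. if i \<le> m then \<sigma> (\<theta> i) else undefined)) \<rparr>"

definition Sing_map :: "('a \<Rightarrow> 'b) \<Rightarrow> nat \<Rightarrow> (nat \<Rightarrow> 'a) \<Rightarrow> (nat \<Rightarrow> 'b)" where
  "Sing_map f = (\<lambda>n \<sigma>. (\<lambda>i. if i \<le> n then f (\<sigma> i) else undefined))"

text \<open>sd \<Delta>[n]: the nerve of the poset of nonempty subsets of {0..n}
  (m-simplices: chains c 0 \<subseteq> ... \<subseteq> c m, normalised to {} beyond m).\<close>
definition sd_std :: "nat \<Rightarrow> (nat \<Rightarrow> nat set) sset" where
  "sd_std n = \<lparr> sset_set = (\<lambda>m. {c. (\<forall>i\<le>m. c i \<noteq> {} \<and> c i \<subseteq> {0..n}) \<and>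
                                   (\<forall>i j. i \<le> j \<and> j \<le> m \<longrightarrow> c i \<subseteq> c j) \<and>
                                   (\<forall>i>m. c i = {})}),
                 sset_act = (\<lambda>l m \<phi> c. (\<lambda>i. if i \<le> l then c (\<phi> i) else {})) \<rparr>"

definition sd_op :: "(nat \<Rightarrow> nat) \<Rightarrow> nat \<Rightarrow> (nat \<Rightarrow> nat set) \<Rightarrow> (nat \<Rightarrow> nat set)" where
  "sd_op \<theta> l c = (\<lambda>i. if i \<le> l then \<theta> ` c i else {})"

definition Ex :: "'x sset \<Rightarrow> (nat \<Rightarrow> (nat \<Rightarrow> nat set) \<Rightarrow> 'x) sset" where
  "Ex X = \<lparr> sset_set = (\<lambda>n. {F. sset_map (sd_std n) X F \<and>
                               (\<forall>l c. c \<notin> sset_set (sd_std n) l \<longrightarrow> F l c = undefined)}),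
            sset_act = (\<lambda>m n \<theta> F. (\<lambda>l c. if c \<in> sset_set (sd_std m) l
                                          then F l (sd_op \<theta> l c) else undefined)) \<rparr>"

definition Ex_map :: "(nat \<Rightarrow> 'x \<Rightarrow> 'y) \<Rightarrow> nat \<Rightarrow> (nat \<Rightarrow> (nat \<Rightarrow> nat set) \<Rightarrow> 'x)
                        \<Rightarrow> (nat \<Rightarrow> (nat \<Rightarrow> nat set) \<Rightarrow> 'y)" where
  "Ex_map p = (\<lambda>n F. (\<lambda>l c. if c \<in> sset_set (sd_std n) l then p l (F l c) else undefined))"

definition simplex_push :: "nat \<Rightarrow> nat \<Rightarrow> (nat \<Rightarrow> nat) \<Rightarrow> (nat \<Rightarrow> real) \<Rightarrow> (nat \<Rightarrow> real)" where
  "simplex_push m n \<theta> t = (\<lambda>j. if j \<le> n then (\<Sum>i\<in>{i. i \<le> m \<and> \<theta> i = j}. t i) else 0)"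

definition real_carrier :: "'x sset \<Rightarrow> (nat \<times> 'x \<times> (nat \<Rightarrow> real)) set" where
  "real_carrier X = {(n, x, t). x \<in> sset_set X n \<and> t \<in> standard_simplex n}"

definition real_rel :: "'x sset \<Rightarrow> ((nat \<times> 'x \<times> (nat \<Rightarrow> real)) \<times> (nat \<times> 'x \<times> (nat \<Rightarrow> real))) set" where
  "real_rel X = {((m, sset_act X m n \<theta> x, t), (n, x, simplex_push m n \<theta> t)) | m n \<theta> x t.
                   simp_op m n \<theta> \<and> x \<in> sset_set X n \<and> t \<in> standard_simplex m}"

definition real_class :: "'x sset \<Rightarrow> nat \<times> 'x \<times> (nat \<Rightarrow> real) \<Rightarrow> (nat \<times> 'x \<times> (nat \<Rightarrow> real)) set" where
  "real_class X p = ((real_rel X \<union> (real_rel X)\<inverse>)\<^sup>*) `` {p}"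

definition real_points :: "'x sset \<Rightarrow> (nat \<times> 'x \<times> (nat \<Rightarrow> real)) set set" where
  "real_points X = real_class X ` real_carrier X"

text \<open>|X| with the quotient topology of the disjoint union of X_n \<times> |\<Delta>^n|.\<close>
definition realization :: "'x sset \<Rightarrow> (nat \<times> 'x \<times> (nat \<Rightarrow> real)) set topology" where
  "realization X = topology (\<lambda>U. U \<subseteq> real_points X \<and>
      (\<forall>n x. x \<in> sset_set X n \<longrightarrow>
          openin (subtopology (powertop_real UNIV) (standard_simplex n))
                 {t \<in> standard_simplex n. real_class X (n, x, t) \<in> U}))"

definition realization_map :: "'x sset \<Rightarrow> 'y sset \<Rightarrow> (nat \<Rightarrow> 'x \<Rightarrow> 'y)
   \<Rightarrow> (nat \<times> 'x \<times> (nat \<Rightarrow> real)) set \<Rightarrow> (nat \<times> 'y \<times> (nat \<Rightarrow> real)) set" where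
  "realization_map X Y f c =
     (case (SOME p. p \<in> c) of (n, x, t) \<Rightarrow> real_class Y (n, f n x, t))"

definition sphere_base :: "nat \<Rightarrow> real" where
  "sphere_base = (\<lambda>i. if i = 0 then 1 else 0)"

text \<open>Weak homotopy equivalence of spaces: bijection on path components and,
  for every base point and every n \<ge> 1, bijection on \<pi>_n (pointed homotopy
  classes of pointed maps from the n-sphere).\<close>
definition weak_homotopy_equivalence :: "'a topology \<Rightarrow> 'b topology \<Rightarrow> ('a \<Rightarrow> 'b) \<Rightarrow> bool" where
  "weak_homotopy_equivalence X Y f \<longleftrightarrow> continuous_map X Y f \<and>
    (\<forall>y\<in>topspace Y. \<exists>x\<in>topspace X. path_component_of Y (f x) y) \<and>
    (\<forall>x1\<in>topspace X. \<forall>x2\<in>topspace X.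
        path_component_of Y (f x1) (f x2) \<longrightarrow> path_component_of X x1 x2) \<and>
    (\<forall>n\<ge>1. \<forall>x\<in>topspace X.
       (\<forall>g'. continuous_map (nsphere n) Y g' \<and> g' sphere_base = f x \<longrightarrow>
          (\<exists>g. continuous_map (nsphere n) X g \<and> g sphere_base = x \<and>
               homotopic_with (\<lambda>h. h sphere_base = f x) (nsphere n) Y (f \<circ> g) g')) \<and>
       (\<forall>g1 g2. continuous_map (nsphere n) X g1 \<and> g1 sphere_base = x \<and>
                continuous_map (nsphere n) X g2 \<and> g2 sphere_base = x \<and>
                homotopic_with (\<lambda>h. h sphere_base = f x) (nsphere n) Y (f \<circ> g1) (f \<circ> g2) \<longrightarrow>
                homotopic_with (\<lambda>h. h sphere_base = x) (nsphere n) X g1 g2))"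

definition sset_weak_equivalence :: "'x sset \<Rightarrow> 'y sset \<Rightarrow> (nat \<Rightarrow> 'x \<Rightarrow> 'y) \<Rightarrow> bool" where
  "sset_weak_equivalence X Y f \<longleftrightarrow> sset_map X Y f \<and>
     weak_homotopy_equivalence (realization X) (realization Y) (realization_map X Y f)"

definition thomason_weak_equivalence :: "'a cpx \<Rightarrow> 'b cpx \<Rightarrow> ('a \<Rightarrow> 'b) \<Rightarrow> bool" where
  "thomason_weak_equivalence K L f \<longleftrightarrow> cpx_map K L f \<and>
     sset_weak_equivalence (Sing K) (Sing L) (Sing_map f)"

definition thomason_fibration :: "'a cpx \<Rightarrow> 'b cpx \<Rightarrow> ('a \<Rightarrow> 'b) \<Rightarrow> bool" where
  "thomason_fibration K L f \<longleftrightarrow> cpx_map K L f \<and>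
     kan_fibration (Ex (Ex (Sing K))) (Ex (Ex (Sing L))) (Ex_map (Ex_map (Sing_map f)))"

definition thomason_trivial_fibration :: "'a cpx \<Rightarrow> 'b cpx \<Rightarrow> ('a \<Rightarrow> 'b) \<Rightarrow> bool" where
  "thomason_trivial_fibration K L f \<longleftrightarrow>
     thomason_weak_equivalence K L f \<and> thomason_fibration K L f"

definition cpx_llp :: "'c cpx \<Rightarrow> 'd cpx \<Rightarrow> ('c \<Rightarrow> 'd) \<Rightarrow> 'a cpx \<Rightarrow> 'b cpx \<Rightarrow> ('a \<Rightarrow> 'b) \<Rightarrow> bool" where
  "cpx_llp A B i K L p \<longleftrightarrow>
     (\<forall>u v. cpx_map A K u \<and> cpx_map B L v \<and> (\<forall>a\<in>cverts A. p (u a) = v (i a)) \<longrightarrow>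
        (\<exists>h. cpx_map B K h \<and> (\<forall>a\<in>cverts A. h (i a) = u a) \<and>
             (\<forall>b\<in>cverts B. p (h b) = v b)))"

end

theory Submission
  imports Defs "HOL-Analysis.Abstract_Topological_Spaces"
begin

lemma sd_mem: "c \<in> sset_set (sd_std m) l \<longleftrightarrow> (\<forall>i\<le>l. c i \<noteq> {} \<and> c i \<subseteq> {0..m}) \<and>
   (\<forall>i j. i \<le> j \<and> j \<le> l \<longrightarrow> c i \<subseteq> c j) \<and> (\<forall>i>l. c i = {})"
  by (simp add: sd_std_def)

lemma sd_act_mem:
  assumes "simp_op k l \<psi>" "c \<in> sset_set (sd_std m) l"
  shows "(\<lambda>i. if i \<le> k then c (\<psi> i) else {}) \<in> sset_set (sd_std m) k"
  using assms unfolding sd_mem simp_op_def by auto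

lemma sd_op_mem:
  assumes "simp_op m n \<theta>" "c \<in> sset_set (sd_std m) l"
  shows "sd_op \<theta> l c \<in> sset_set (sd_std n) l"
  using assms unfolding sd_mem simp_op_def sd_op_def
  by (auto simp: image_mono) (meson atLeastAtMost_iff le0 subset_iff)

lemma sd_act_eq: "sset_act (sd_std m) k l \<psi> c = (\<lambda>i. if i \<le> k then c (\<psi> i) else {})"
  by (simp add: sd_std_def)

lemma sd_act_mem':
  assumes "simp_op k l \<psi>" "c \<in> sset_set (sd_std m) l"
  shows "sset_act (sd_std m) k l \<psi> c \<in> sset_set (sd_std m) k"
  unfolding sd_act_eq using sd_act_mem[OF assms] .

definition EE :: "(nat set set \<Rightarrow> 'b) \<Rightarrow> nat \<Rightarrow> nat \<Rightarrow> (nat \<Rightarrow> nat set) \<Rightarrow> nat \<Rightarrow> (nat \<Rightarrow> nat set) \<Rightarrow> nat \<Rightarrow> 'b" where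
"EE \<phi> m = (\<lambda>l c. if c \<in> sset_set (sd_std m) l then (\<lambda>l' c'. if c' \<in> sset_set (sd_std l) l' then
   (\<lambda>i. if i \<le> l' then \<phi> (c ` c' i) else undefined) else undefined) else undefined)"

lemma EE_cong:
  assumes "\<And>D. (\<forall>S\<in>D. S \<subseteq> {0..m}) \<Longrightarrow> \<phi>1 D = \<phi>2 D"
  shows "EE \<phi>1 m = EE \<phi>2 m"
proof -
  have "\<phi>1 (c ` c' i) = \<phi>2 (c ` c' i)" if "c \<in> sset_set (sd_std m) l" "c' \<in> sset_set (sd_std l) l'" "i \<le> l'"
    for c c' l l' i
  proof (rule assms, intro ballI)
    fix S assume "S \<in> c ` c' i"
    then obtain j where "j \<in> c' i" "S = c j" by auto
    moreover have "j \<le> l" using that(2,3) \<open>j \<in> c' i\<close> unfolding sd_mem by fastforce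
    ultimately show "S \<subseteq> {0..m}" using that(1) unfolding sd_mem by auto
  qed
  then show ?thesis unfolding EE_def by (intro ext) auto
qed

lemma act_EE:
  assumes "simp_op m n \<theta>"
  shows "sset_act (Ex X) m n \<theta> (EE \<phi> n) = EE (\<lambda>D. \<phi> ((`) \<theta> ` D)) m"
proof (intro ext)
  fix l c l' c' i
  show "sset_act (Ex X) m n \<theta> (EE \<phi> n) l c l' c' i = EE (\<lambda>D. \<phi> ((`) \<theta> ` D)) m l c l' c' i"
  proof (cases "c \<in> sset_set (sd_std m) l \<and> c' \<in> sset_set (sd_std l) l' \<and> i \<le> l'")
    case True
    then have "c' i \<subseteq> {0..l}" unfolding sd_mem by auto
    then have "sd_op \<theta> l c ` c' i = (`) \<theta> ` c ` c' i" unfolding sd_op_def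
      by (auto simp: image_iff; force)
    then show ?thesis using True sd_op_mem[OF assms, of c l] by (simp add: Ex_def EE_def)
  next
    case False
    then show ?thesis using sd_op_mem[OF assms, of c l] by (auto simp add: Ex_def EE_def)
  qed
qed

lemma Exmap_EE:
  "Ex_map (Ex_map (Sing_map p)) m (EE \<phi> m) = EE (p \<circ> \<phi>) m"
  by (intro ext) (simp add: Ex_map_def Sing_map_def EE_def)

lemma Sing_mem:
  "s \<in> sset_set (Sing L) n \<longleftrightarrow> cpx_map (cpx_simplex n) L s \<and> (\<forall>i>n. s i = undefined)"
  by (simp add: Sing_def)

lemma Ex_mem:
  "F \<in> sset_set (Ex X) n \<longleftrightarrow> sset_map (sd_std n) X F \<and>
      (\<forall>l c. c \<notin> sset_set (sd_std n) l \<longrightarrow> F l c = undefined)"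
  by (simp add: Ex_def)

lemma Ex_act_eq: "sset_act (Ex X) m n \<theta> F = (\<lambda>l c. if c \<in> sset_set (sd_std m) l then F l (sd_op \<theta> l c) else undefined)"
  by (simp add: Ex_def)

lemma EE_mem:
  assumes L: "simplicial_complex L" and sig: "\<sigma> \<in> csimps L" and phi: "\<And>D. \<phi> D \<in> \<sigma>"
  shows "EE \<phi> m \<in> sset_set (Ex (Ex (Sing L))) m"
proof -
  have sv: "\<sigma> \<subseteq> cverts L" and sub: "\<And>t. t \<subseteq> \<sigma> \<Longrightarrow> t \<noteq> {} \<Longrightarrow> t \<in> csimps L"
    using L sig unfolding simplicial_complex_def by blast+
  define Fc where "Fc c l = (\<lambda>l' c'. if c' \<in> sset_set (sd_std l) l' then
   (\<lambda>i. if i \<le> l' then \<phi> (c ` c' i) else undefined) else undefined)" for c l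
  have EEc: "EE \<phi> m l c = (if c \<in> sset_set (sd_std m) l then Fc c l else undefined)" for l c
    unfolding EE_def Fc_def by simp
  have inner: "Fc c l \<in> sset_set (Ex (Sing L)) l" for c l
    unfolding Ex_mem sset_map_def
  proof (intro conjI allI impI)
    fix l' c' assume c': "c' \<in> sset_set (sd_std l) l'"
    show "Fc c l l' c' \<in> sset_set (Sing L) l'"
      unfolding Sing_mem cpx_map_def cpx_simplex_def cverts_def csimps_def Fc_def
      using c' sv phi by (auto intro!: sub[unfolded csimps_def] simp: cverts_def)
  next
    fix k l' \<psi> c' assume a: "simp_op k l' \<psi> \<and> c' \<in> sset_set (sd_std l) l'"
    then have m: "sset_act (sd_std l) k l' \<psi> c' \<in> sset_set (sd_std l) k"
      using sd_act_mem' by blast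
    show "Fc c l k (sset_act (sd_std l) k l' \<psi> c') = sset_act (Sing L) k l' \<psi> (Fc c l l' c')"
      using a m unfolding Fc_def by (auto simp: Sing_def sd_std_def simp_op_def)
  next
    fix l' c' assume "c' \<notin> sset_set (sd_std l) l'"
    then show "Fc c l l' c' = undefined" unfolding Fc_def by simp
  qed
  show ?thesis
    unfolding Ex_mem[of "EE \<phi> m"] sset_map_def[of "sd_std m"]
  proof (intro conjI allI impI)
    fix l c assume "c \<in> sset_set (sd_std m) l"
    then show "EE \<phi> m l c \<in> sset_set (Ex (Sing L)) l" using inner EEc by simp
  next
    fix k l \<psi> c assume a: "simp_op k l \<psi> \<and> c \<in> sset_set (sd_std m) l"
    then have m: "sset_act (sd_std m) k l \<psi> c \<in> sset_set (sd_std m) k"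
      using sd_act_mem' by blast
    show "EE \<phi> m k (sset_act (sd_std m) k l \<psi> c) = sset_act (Ex (Sing L)) k l \<psi> (EE \<phi> m l c)"
    proof (intro ext)
      fix l' c' i
      show "EE \<phi> m k (sset_act (sd_std m) k l \<psi> c) l' c' i = sset_act (Ex (Sing L)) k l \<psi> (EE \<phi> m l c) l' c' i"
      proof (cases "c' \<in> sset_set (sd_std k) l' \<and> i \<le> l'")
        case True
        then have ci: "c' i \<subseteq> {0..k}" unfolding sd_mem by auto
        have "(sset_act (sd_std m) k l \<psi> c) ` c' i = (\<lambda>j. c (\<psi> j)) ` c' i"
          unfolding sd_act_eq using ci by (intro image_cong) auto
        also have "\<dots> = c ` sd_op \<psi> l' c' i" using True by (simp add: sd_op_def image_image)
        finally have eq: "(sset_act (sd_std m) k l \<psi> c) ` c' i = c ` sd_op \<psi> l' c' i" .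
        have "sd_op \<psi> l' c' \<in> sset_set (sd_std l) l'" using sd_op_mem[of k l \<psi> c' l'] a True by blast
        then show ?thesis using True a m  EEc eq
          by (simp add: Ex_act_eq Fc_def)
      next
        case False
        then show ?thesis using a m sd_op_mem[of k l \<psi> c' l'] EEc
          by (auto simp add: Ex_act_eq Fc_def)
      qed
    qed
  next
    fix l c assume "c \<notin> sset_set (sd_std m) l"
    then show "EE \<phi> m l c = undefined" using EEc by simp
  qed
qed

lemma c0_mem: "(\<lambda>j. if j \<le> N then {N-j..N} else {}) \<in> sset_set (sd_std N) N"
  unfolding sd_mem by auto

lemma c0_img:
  assumes "i \<le> N"
  defines "c0 \<equiv> (\<lambda>j::nat. if j \<le> N then {N-j..N} else {})"
  shows "\<Union>(c0 ` c0 i) = {0..N}" "\<Inter>(c0 ` c0 i) = {i..N}"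
proof -
  have ci: "c0 i = {N-i..N}" using assms(1) by (simp add: c0_def)
  have e: "c0 ` c0 i = (\<lambda>k. {N-k..N}) ` {N-i..N}" unfolding ci
    by (rule image_cong) (auto simp: c0_def)
  show "\<Union>(c0 ` c0 i) = {0..N}" unfolding e
  proof
    show "\<Union> ((\<lambda>k. {N - k..N}) ` {N - i..N}) \<subseteq> {0..N}" by auto
    have "N \<in> {N - i..N}" by simp
    then have "{N-N..N} \<subseteq> \<Union> ((\<lambda>k. {N - k..N}) ` {N - i..N})" by (rule UN_upper)
    then show "{0..N} \<subseteq> \<Union> ((\<lambda>k. {N - k..N}) ` {N - i..N})" by simp
  qed
  show "\<Inter>(c0 ` c0 i) = {i..N}" unfolding e
  proof
    show "\<Inter> ((\<lambda>k. {N - k..N}) ` {N - i..N}) \<subseteq> {i..N}"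
    proof
      fix x assume x: "x \<in> \<Inter> ((\<lambda>k. {N - k..N}) ` {N - i..N})"
      have "N - i \<in> {N - i..N}" by simp
      then have "x \<in> {N - (N-i)..N}" using x by (rule InterD[OF _ imageI, rotated])
      then show "x \<in> {i..N}" using assms(1) by simp
    qed
    show "{i..N} \<subseteq> \<Inter> ((\<lambda>k. {N - k..N}) ` {N - i..N})" by auto
  qed
qed

lemma op_id_mem: "op_id N \<in> sset_set (std_sset N) N"
  by (simp add: std_sset_def simp_op_def op_id_def)

lemma lift_core:
  assumes K: "simplicial_complex K" and L: "simplicial_complex L"
    and fib: "kan_fibration (Ex (Ex (Sing K))) (Ex (Ex (Sing L))) (Ex_map (Ex_map (Sing_map p)))"
    and x0: "x0 \<in> cverts K" and sig: "\<sigma> \<in> csimps L" and px0: "p x0 \<in> \<sigma>"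
    and w: "\<And>i. w i \<in> \<sigma>" and N: "1 \<le> N"
  shows "\<exists>g. g \<in> sset_set (Sing K) N \<and> (\<forall>i\<le>N. p (g i) = w i)"
proof -
  define \<phi> where "\<phi> D = (if \<exists>j\<le>N. j \<noteq> 0 \<and> j \<notin> \<Union>D then p x0 else w (Min (\<Inter> D)))" for D
  define a where "a = (\<lambda>(m::nat) (\<theta>::nat\<Rightarrow>nat). EE (\<lambda>_. x0) m)"
  define b where "b = (\<lambda>m (\<theta>::nat\<Rightarrow>nat). EE (\<lambda>D. \<phi> ((`) \<theta> ` D)) m)"
  have phis: "\<phi> D \<in> \<sigma>" for D using px0 w unfolding \<phi>_def by auto
  have x0s: "{x0} \<in> csimps K" using K x0 unfolding simplicial_complex_def by blast
  have ha: "sset_map (horn_sset N 0) (Ex (Ex (Sing K))) a"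
    unfolding sset_map_def
  proof (intro conjI allI impI)
    fix m \<theta> assume "\<theta> \<in> sset_set (horn_sset N 0) m"
    show "a m \<theta> \<in> sset_set (Ex (Ex (Sing K))) m" unfolding a_def
      by (rule EE_mem[OF K x0s]) simp
  next
    fix m n \<theta> x assume "simp_op m n \<theta> \<and> x \<in> sset_set (horn_sset N 0) n"
    then show "a m (sset_act (horn_sset N 0) m n \<theta> x) = sset_act (Ex (Ex (Sing K))) m n \<theta> (a n x)"
      unfolding a_def by (simp add: act_EE)
  qed
  have hb: "sset_map (std_sset N) (Ex (Ex (Sing L))) b"
    unfolding sset_map_def
  proof (intro conjI allI impI)
    fix m \<theta> assume "\<theta> \<in> sset_set (std_sset N) m"
    show "b m \<theta> \<in> sset_set (Ex (Ex (Sing L))) m" unfolding b_def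
      by (rule EE_mem[OF L sig]) (rule phis)
  next
    fix m n \<psi> \<theta> assume a: "simp_op m n \<psi> \<and> \<theta> \<in> sset_set (std_sset N) n"
    have "EE (\<lambda>D. \<phi> ((`) (op_comp m \<theta> \<psi>) ` D)) m = EE (\<lambda>D. \<phi> ((`) \<theta> ` (`) \<psi> ` D)) m"
    proof (rule EE_cong)
      fix D :: "nat set set" assume D: "\<forall>S\<in>D. S \<subseteq> {0..m}"
      have "(`) (op_comp m \<theta> \<psi>) ` D = (`) \<theta> ` (`) \<psi> ` D"
      proof -
        have "op_comp m \<theta> \<psi> ` S = \<theta> ` \<psi> ` S" if "S \<in> D" for S
          using D that unfolding op_comp_def by (force simp: image_iff)
        then show ?thesis by (force simp: image_iff)
      qed
      then show "\<phi> ((`) (op_comp m \<theta> \<psi>) ` D) = \<phi> ((`) \<theta> ` (`) \<psi> ` D)" by simp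
    qed
    then show "b m (sset_act (std_sset N) m n \<psi> \<theta>) = sset_act (Ex (Ex (Sing L))) m n \<psi> (b n \<theta>)"
      unfolding b_def using a by (simp add: act_EE std_sset_def)
  qed
  have comp: "Ex_map (Ex_map (Sing_map p)) m (a m \<theta>) = b m \<theta>"
    if th: "\<theta> \<in> sset_set (horn_sset N 0) m" for m \<theta>
  proof -
    obtain j where j: "j \<le> N" "j \<noteq> 0" "j \<notin> \<theta> ` {0..m}" using th by (auto simp: horn_sset_def)
    have "EE (p \<circ> (\<lambda>_. x0)) m = EE (\<lambda>D. \<phi> ((`) \<theta> ` D)) m"
    proof (rule EE_cong)
      fix D :: "nat set set" assume D: "\<forall>S\<in>D. S \<subseteq> {0..m}"
      then have "j \<notin> \<Union>((`) \<theta> ` D)" using j by blast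
      then have "\<exists>j'\<le>N. j' \<noteq> 0 \<and> j' \<notin> \<Union>((`) \<theta> ` D)" using j by blast
      then show "(p \<circ> (\<lambda>_. x0)) D = \<phi> ((`) \<theta> ` D)" unfolding \<phi>_def by simp
    qed
    then show ?thesis unfolding a_def b_def Exmap_EE .
  qed
  obtain h where h: "sset_map (std_sset N) (Ex (Ex (Sing K))) h"
    and hp: "\<And>m \<theta>. \<theta> \<in> sset_set (std_sset N) m \<Longrightarrow> Ex_map (Ex_map (Sing_map p)) m (h m \<theta>) = b m \<theta>"
  proof -
    have "\<exists>h. sset_map (std_sset N) (Ex (Ex (Sing K))) h \<and>
            (\<forall>m \<theta>. \<theta> \<in> sset_set (horn_sset N 0) m \<longrightarrow> h m \<theta> = a m \<theta>) \<and>
            (\<forall>m \<theta>. \<theta> \<in> sset_set (std_sset N) m \<longrightarrow> Ex_map (Ex_map (Sing_map p)) m (h m \<theta>) = b m \<theta>)"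
      by (rule fib[unfolded kan_fibration_def, THEN conjunct2, rule_format, of N 0 a b])
         (use N ha hb comp in blast)
    then show ?thesis using that by blast
  qed
  define c0 where "c0 = (\<lambda>j::nat. if j \<le> N then {N-j..N} else {})"
  have c0m: "c0 \<in> sset_set (sd_std N) N" unfolding c0_def by (rule c0_mem)
  define G where "G = h N (op_id N)"
  have G: "G \<in> sset_set (Ex (Ex (Sing K))) N" using h op_id_mem unfolding G_def sset_map_def by blast
  then have "G N c0 \<in> sset_set (Ex (Sing K)) N" using c0m unfolding Ex_mem sset_map_def by blast
  then have g: "G N c0 N c0 \<in> sset_set (Sing K) N" using c0m unfolding Ex_mem sset_map_def by blast
  have eqb: "Ex_map (Ex_map (Sing_map p)) N G = b N (op_id N)" using hp op_id_mem unfolding G_def by blast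
  have "p (G N c0 N c0 i) = w i" if i: "i \<le> N" for i
  proof -
    have "Ex_map (Ex_map (Sing_map p)) N G N c0 N c0 i = p (G N c0 N c0 i)"
      using c0m i by (simp add: Ex_map_def Sing_map_def)
    moreover have "b N (op_id N) N c0 N c0 i = \<phi> ((`) (op_id N) ` c0 ` c0 i)"
      using c0m i by (simp add: b_def EE_def)
    moreover have "(`) (op_id N) ` c0 ` c0 i = c0 ` c0 i"
    proof -
      have "op_id N ` S = S" if "S \<subseteq> {0..N}" for S
        using that unfolding op_id_def by (force simp: image_iff)
      moreover have "\<forall>S\<in>c0 ` c0 i. S \<subseteq> {0..N}" unfolding c0_def by auto
      ultimately show ?thesis by (force simp: image_iff)
    qed
    moreover have "\<phi> (c0 ` c0 i) = w i"
    proof -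
      have mi: "Min {i..N} = i" using i by (intro Min_eqI) auto
      have u: "\<Union>(c0 ` c0 i) = {0..N}" unfolding c0_def by (rule c0_img(1)[OF i])
      have n: "\<Inter>(c0 ` c0 i) = {i..N}" unfolding c0_def by (rule c0_img(2)[OF i])
      have "\<not> (\<exists>j\<le>N. j \<noteq> 0 \<and> j \<notin> \<Union>(c0 ` c0 i))" unfolding u by auto
      then have "\<phi> (c0 ` c0 i) = w (Min (\<Inter>(c0 ` c0 i)))" unfolding \<phi>_def by (simp only: if_False)
      then show ?thesis using n mi by simp
    qed
    ultimately show ?thesis using eqb by metis
  qed
  then show ?thesis using g by blast
qed

lemma rt_inv:
  assumes "(a, b) \<in> (S \<union> S\<inverse>)\<^sup>*" and "\<And>c d. (c, d) \<in> S \<Longrightarrow> P c = P d"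
  shows "P a = P b"
  using assms(1)
proof (induction rule: rtrancl_induct)
  case base then show ?case by simp
next
  case (step y z)
  from step(2) have "P y = P z"
  proof
    assume "(y, z) \<in> S" then show ?thesis by (rule assms(2))
  next
    assume "(y, z) \<in> S\<inverse>" then have "(z, y) \<in> S" by simp
    then show ?thesis using assms(2) by metis
  qed
  then show ?case using step(3) by simp
qed

lemma istop_real:
  "istopology (\<lambda>U. U \<subseteq> real_points X \<and>
      (\<forall>n x. x \<in> sset_set X n \<longrightarrow>
          openin (subtopology (powertop_real UNIV) (standard_simplex n))
                 {t \<in> standard_simplex n. real_class X (n, x, t) \<in> U}))"
  unfolding istopology_def
proof (intro conjI allI impI ballI)
  fix S T
  assume S: "S \<subseteq> real_points X \<and> (\<forall>n x. x \<in> sset_set X n \<longrightarrow>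
          openin (subtopology (powertop_real UNIV) (standard_simplex n))
                 {t \<in> standard_simplex n. real_class X (n, x, t) \<in> S})"
     and T: "T \<subseteq> real_points X \<and> (\<forall>n x. x \<in> sset_set X n \<longrightarrow>
          openin (subtopology (powertop_real UNIV) (standard_simplex n))
                 {t \<in> standard_simplex n. real_class X (n, x, t) \<in> T})"
  show "S \<inter> T \<subseteq> real_points X" using S by blast
  fix n x assume x: "x \<in> sset_set X n"
  have "{t \<in> standard_simplex n. real_class X (n, x, t) \<in> S \<inter> T} =
        {t \<in> standard_simplex n. real_class X (n, x, t) \<in> S} \<inter> {t \<in> standard_simplex n. real_class X (n, x, t) \<in> T}"
    by blast
  then show "openin (subtopology (powertop_real UNIV) (standard_simplex n))
                 {t \<in> standard_simplex n. real_class X (n, x, t) \<in> S \<inter> T}"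
    using S T x by (simp add: openin_Int)
next
  fix KK
  assume KK: "\<forall>K\<in>KK. K \<subseteq> real_points X \<and> (\<forall>n x. x \<in> sset_set X n \<longrightarrow>
          openin (subtopology (powertop_real UNIV) (standard_simplex n))
                 {t \<in> standard_simplex n. real_class X (n, x, t) \<in> K})"
  show "\<Union>KK \<subseteq> real_points X" using KK by blast
  fix n x assume x: "x \<in> sset_set X n"
  have "{t \<in> standard_simplex n. real_class X (n, x, t) \<in> \<Union>KK} =
        \<Union>((\<lambda>K. {t \<in> standard_simplex n. real_class X (n, x, t) \<in> K}) ` KK)"
    by blast
  then show "openin (subtopology (powertop_real UNIV) (standard_simplex n))
                 {t \<in> standard_simplex n. real_class X (n, x, t) \<in> \<Union>KK}"
    using KK x by (auto intro!: openin_Union)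
qed

lemma openin_real:
  "openin (realization X) U \<longleftrightarrow> U \<subseteq> real_points X \<and>
      (\<forall>n x. x \<in> sset_set X n \<longrightarrow>
          openin (subtopology (powertop_real UNIV) (standard_simplex n))
                 {t \<in> standard_simplex n. real_class X (n, x, t) \<in> U})"
  unfolding realization_def by (subst topology_inverse'[OF istop_real]) (rule refl)

lemma class_self: "q \<in> real_class X q"
  unfolding real_class_def by blast

lemma class_points: "q \<in> real_carrier X \<Longrightarrow> real_class X q \<in> real_points X"
  unfolding real_points_def by blast

lemma topspace_real: "topspace (realization X) = real_points X"
proof
  have "openin (realization X) (real_points X)"
    unfolding openin_real
  proof (intro conjI allI impI)
    fix n x assume "x \<in> sset_set X n"
    then have "{t \<in> standard_simplex n. real_class X (n, x, t) \<in> real_points X} = standard_simplex n"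
      using class_points[of "(n, x, _)" X] by (auto simp: real_carrier_def)
    then show "openin (subtopology (powertop_real UNIV) (standard_simplex n))
         {t \<in> standard_simplex n. real_class X (n, x, t) \<in> real_points X}"
      by (metis openin_topspace topspace_standard_simplex)
  qed simp
  then show "real_points X \<subseteq> topspace (realization X)" by (rule openin_subset)
  show "topspace (realization X) \<subseteq> real_points X"
    using openin_topspace[of "realization X"] unfolding openin_real by blast
qed

lemma clopen_path:
  assumes "path_component_of Y a b" "openin Y U" "openin Y (topspace Y - U)" "a \<in> U"
  shows "b \<in> U"
proof -
  obtain g where g: "pathin Y g" "g 0 = a" "g 1 = b" using assms(1) unfolding path_component_of_def by blast
  have c: "connectedin Y (g ` {0..1})" by (rule connectedin_path_image[OF g(1)])
  have "closedin Y U" using assms(2,3) by (simp add: closedin_def openin_subset)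
  then have "g ` {0..1} \<subseteq> U \<or> disjnt (g ` {0..1}) U" using connectedin_clopen_cases[OF c _ assms(2)] by blast
  moreover have "a \<in> g ` {0..1}" using g(2) by (intro image_eqI[of _ g 0]) auto
  moreover have "b \<in> g ` {0..1}" using g(3) by (intro image_eqI[of _ g 1]) auto
  ultimately show ?thesis using assms(4) by (auto simp: disjnt_def)
qed

lemma img_closed:
  assumes K: "simplicial_complex K" and L: "simplicial_complex L"
    and fib: "kan_fibration (Ex (Ex (Sing K))) (Ex (Ex (Sing L))) (Ex_map (Ex_map (Sing_map p)))"
    and y: "y \<in> p ` cverts K" and tau: "\<tau> \<in> csimps L" "y \<in> \<tau>" "z \<in> \<tau>"
  shows "z \<in> p ` cverts K"
proof -
  obtain x0 where x0: "x0 \<in> cverts K" "p x0 = y" using y by blast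
  obtain g where g: "g \<in> sset_set (Sing K) 1" "\<forall>i\<le>1. p (g i) = z"
    using lift_core[OF K L fib x0(1) tau(1), of "\<lambda>_. z" 1] x0 tau by auto
  have "g 0 \<in> cverts K" using g(1) unfolding Sing_mem cpx_map_def cpx_simplex_def cverts_def by auto
  then show ?thesis using g(2) by force
qed

lemma const_open: "openin (subtopology (powertop_real UNIV) (standard_simplex n)) {t \<in> standard_simplex n. P}"
proof (cases P)
  case True
  then show ?thesis by (simp add: openin_topspace[of "subtopology (powertop_real UNIV) (standard_simplex n)", simplified])
next
  case False
  then show ?thesis by simp
qed

lemma vertex_in_img:
  assumes K: "simplicial_complex K" and L: "simplicial_complex L"
    and fib: "kan_fibration (Ex (Ex (Sing K))) (Ex (Ex (Sing L))) (Ex_map (Ex_map (Sing_map p)))"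
    and we: "weak_homotopy_equivalence (realization (Sing K)) (realization (Sing L))
               (realization_map (Sing K) (Sing L) (Sing_map p))"
    and y: "y \<in> cverts L"
  shows "y \<in> p ` cverts K"
proof -
  define Img where "Img = p ` cverts K"
  define Inv where "Inv q = (fst (snd q) 0 \<in> Img)" for q :: "nat \<times> (nat \<Rightarrow> 'b) \<times> (nat \<Rightarrow> real)"
  have clos: "z \<in> Img" if "y' \<in> Img" "\<tau> \<in> csimps L" "y' \<in> \<tau>" "z \<in> \<tau>" for y' \<tau> z
    using img_closed[OF K L fib, of y' \<tau> z] that unfolding Img_def by blast
  have relinv: "Inv c = Inv d" if cd: "(c, d) \<in> real_rel (Sing L)" for c d
  proof -
    obtain m n \<theta> x t where c: "c = (m, sset_act (Sing L) m n \<theta> x, t)" and d: "d = (n, x, simplex_push m n \<theta> t)"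
      and th: "simp_op m n \<theta>" and x: "x \<in> sset_set (Sing L) n"
      using cd unfolding real_rel_def by blast
    have a0: "sset_act (Sing L) m n \<theta> x 0 = x (\<theta> 0)" by (simp add: Sing_def)
    have "{0..n} \<in> csimps (cpx_simplex n)" by (simp add: cpx_simplex_def csimps_def)
    then have tau: "x ` {0..n} \<in> csimps L" using x unfolding Sing_mem cpx_map_def by blast
    have "\<theta> 0 \<le> n" using th unfolding simp_op_def by blast
    then have "x (\<theta> 0) \<in> x ` {0..n}" "x 0 \<in> x ` {0..n}" by auto
    then have "(x (\<theta> 0) \<in> Img) = (x 0 \<in> Img)" using clos[OF _ tau] by blast
    then show ?thesis unfolding Inv_def c d using a0 by simp
  qed
  define U where "U = {c \<in> real_points (Sing L). \<exists>q\<in>c. Inv q}"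
  have inrt: "(q, q') \<in> (real_rel X \<union> (real_rel X)\<inverse>)\<^sup>*" if "q' \<in> real_class X q" for X q q'
    using that unfolding real_class_def by blast
  have clsU: "(real_class (Sing L) q \<in> U) = Inv q" if q: "q \<in> real_carrier (Sing L)" for q
  proof
    assume "real_class (Sing L) q \<in> U"
    then obtain q' where "q' \<in> real_class (Sing L) q" "Inv q'" unfolding U_def by blast
    then show "Inv q" using rt_inv[OF inrt, of q' "Sing L" q Inv] relinv by blast
  next
    assume "Inv q"
    then show "real_class (Sing L) q \<in> U" unfolding U_def using class_self class_points[OF q] by blast
  qed
  have key: "real_class (Sing L) (n, x, t) \<in> real_points (Sing L) \<and>
              (real_class (Sing L) (n, x, t) \<in> U \<longleftrightarrow> x 0 \<in> Img)"
    if "x \<in> sset_set (Sing L) n" "t \<in> standard_simplex n" for n x t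
  proof -
    have q: "(n, x, t) \<in> real_carrier (Sing L)" using that by (simp add: real_carrier_def)
    show ?thesis using clsU[OF q] class_points[OF q] unfolding Inv_def by simp
  qed
  have ts: "topspace (realization (Sing L)) = real_points (Sing L)" by (rule topspace_real)
  have Uo: "openin (realization (Sing L)) U"
    unfolding openin_real
  proof (intro conjI allI impI)
    show "U \<subseteq> real_points (Sing L)" unfolding U_def by blast
    fix n x assume x: "x \<in> sset_set (Sing L) n"
    have "{t \<in> standard_simplex n. real_class (Sing L) (n, x, t) \<in> U} = {t \<in> standard_simplex n. x 0 \<in> Img}"
      using key[OF x] by blast
    then show "openin (subtopology (powertop_real UNIV) (standard_simplex n))
        {t \<in> standard_simplex n. real_class (Sing L) (n, x, t) \<in> U}" using const_open by metis
  qed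
  have Vo: "openin (realization (Sing L)) (topspace (realization (Sing L)) - U)"
    unfolding openin_real ts
  proof (intro conjI allI impI)
    show "real_points (Sing L) - U \<subseteq> real_points (Sing L)" by blast
    fix n x assume x: "x \<in> sset_set (Sing L) n"
    have "{t \<in> standard_simplex n. real_class (Sing L) (n, x, t) \<in> real_points (Sing L) - U} = {t \<in> standard_simplex n. x 0 \<notin> Img}"
      using key[OF x] by blast
    then show "openin (subtopology (powertop_real UNIV) (standard_simplex n))
        {t \<in> standard_simplex n. real_class (Sing L) (n, x, t) \<in> real_points (Sing L) - U}" using const_open by metis
  qed
  define y1 :: "nat \<Rightarrow> 'b" where "y1 = (\<lambda>i. if i \<le> 0 then y else undefined)"
  define e0 :: "nat \<Rightarrow> real" where "e0 = (\<lambda>i. if i = 0 then 1 else 0)"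
  have y1m: "y1 \<in> sset_set (Sing L) 0"
    unfolding Sing_mem cpx_map_def
  proof (intro conjI ballI allI impI)
    fix v assume "v \<in> cverts (cpx_simplex 0)"
    then have "v = 0" by (simp add: cpx_simplex_def cverts_def)
    then show "y1 v \<in> cverts L" using y by (simp add: y1_def)
  next
    fix s assume "s \<in> csimps (cpx_simplex 0)"
    then have "s = {0}" by (auto simp: cpx_simplex_def csimps_def)
    moreover have "{y} \<in> csimps L" using L y unfolding simplicial_complex_def by blast
    ultimately show "y1 ` s \<in> csimps L" by (simp add: y1_def)
  next
    fix i :: nat assume "i > 0" then show "y1 i = undefined" by (simp add: y1_def)
  qed
  have e0m: "e0 \<in> standard_simplex 0" by (simp add: standard_simplex_def e0_def)
  define y0 where "y0 = real_class (Sing L) (0, y1, e0)"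
  have y0t: "y0 \<in> topspace (realization (Sing L))" unfolding ts y0_def using key[OF y1m e0m] by blast
  obtain x where x: "x \<in> topspace (realization (Sing K))"
    and pc: "path_component_of (realization (Sing L)) (realization_map (Sing K) (Sing L) (Sing_map p) x) y0"
    using bspec[OF we[unfolded weak_homotopy_equivalence_def, THEN conjunct2, THEN conjunct1] y0t] by blast
  obtain q0 where q0: "q0 \<in> real_carrier (Sing K)" "x = real_class (Sing K) q0"
    using x unfolding topspace_real real_points_def by blast
  define q where "q = (SOME q. q \<in> x)"
  have "q0 \<in> x" using class_self q0(2) by simp
  then have qx: "q \<in> x" unfolding q_def by (rule someI)
  obtain n \<sigma> t where qe: "q = (n, \<sigma>, t)" by (metis prod_cases3)
  have invK: "fst (snd q0) 0 \<in> cverts K = (fst (snd q) 0 \<in> cverts K)"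
  proof (rule rt_inv[of q0 q "real_rel (Sing K)" "\<lambda>q. fst (snd q) 0 \<in> cverts K"])
    show "(q0, q) \<in> (real_rel (Sing K) \<union> (real_rel (Sing K))\<inverse>)\<^sup>*" using inrt qx q0(2) by blast
    fix c d assume cd: "(c, d) \<in> real_rel (Sing K)"
    obtain m n \<theta> x t where c: "c = (m, sset_act (Sing K) m n \<theta> x, t)" and d: "d = (n, x, simplex_push m n \<theta> t)"
      and th: "simp_op m n \<theta>" and x: "x \<in> sset_set (Sing K) n"
      using cd unfolding real_rel_def by blast
    have "\<theta> 0 \<le> n" using th unfolding simp_op_def by blast
    then have "x (\<theta> 0) \<in> cverts K" "x 0 \<in> cverts K" using x unfolding Sing_mem cpx_map_def
      by (auto simp: cpx_simplex_def cverts_def)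
    then show "(fst (snd c) 0 \<in> cverts K) = (fst (snd d) 0 \<in> cverts K)" unfolding c d by (simp add: Sing_def)
  qed
  have "fst (snd q0) 0 \<in> cverts K" using q0(1)
    by (auto simp: real_carrier_def Sing_mem cpx_map_def cpx_simplex_def cverts_def)
  then have s0: "\<sigma> 0 \<in> cverts K" using invK qe by simp
  have fx: "realization_map (Sing K) (Sing L) (Sing_map p) x = real_class (Sing L) (n, Sing_map p n \<sigma>, t)"
    unfolding realization_map_def q_def[symmetric] qe by simp
  have fxt: "real_class (Sing L) (n, Sing_map p n \<sigma>, t) \<in> real_points (Sing L)"
    using path_component_in_topspace[OF pc] fx ts by simp
  then obtain q1 where q1: "q1 \<in> real_carrier (Sing L)" "real_class (Sing L) (n, Sing_map p n \<sigma>, t) = real_class (Sing L) q1"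
    unfolding real_points_def by blast
  have "Inv (n, Sing_map p n \<sigma>, t)" unfolding Inv_def Img_def using s0 by (simp add: Sing_map_def)
  moreover have "Inv q1 = Inv (n, Sing_map p n \<sigma>, t)"
    using rt_inv[OF inrt, of _ "Sing L" q1 Inv] relinv class_self q1(2) by metis
  ultimately have "realization_map (Sing K) (Sing L) (Sing_map p) x \<in> U" using clsU[OF q1(1)] q1(2) fx by simp
  then have "y0 \<in> U" using clopen_path[OF pc Uo Vo] by blast
  then have "Inv (0, y1, e0)" using clsU y1m e0m unfolding y0_def by (simp add: real_carrier_def)
  then show ?thesis unfolding Inv_def Img_def y1_def by simp
qed

theorem lemma6p1:
  fixes n :: nat and K :: "'a cpx" and L :: "'b cpx" and p :: "'a \<Rightarrow> 'b"
  assumes "simplicial_complex K" and "simplicial_complex L"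
    and "thomason_trivial_fibration K L p"
  shows "cpx_llp (empty_cpx :: nat cpx) (cpx_simplex n) (\<lambda>_. undefined) K L p"
proof -
  have K: "simplicial_complex K" and L: "simplicial_complex L" using assms(1,2) .
  have fib: "kan_fibration (Ex (Ex (Sing K))) (Ex (Ex (Sing L))) (Ex_map (Ex_map (Sing_map p)))"
    by (rule assms(3)[unfolded thomason_trivial_fibration_def, THEN conjunct2,
          unfolded thomason_fibration_def, THEN conjunct2])
  have we: "weak_homotopy_equivalence (realization (Sing K)) (realization (Sing L))
               (realization_map (Sing K) (Sing L) (Sing_map p))"
    by (rule assms(3)[unfolded thomason_trivial_fibration_def, THEN conjunct1,
          unfolded thomason_weak_equivalence_def, THEN conjunct2,
          unfolded sset_weak_equivalence_def, THEN conjunct2])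
  show ?thesis unfolding cpx_llp_def
  proof (intro allI impI)
    fix u :: "nat \<Rightarrow> 'a" and v :: "nat \<Rightarrow> 'b"
    assume "cpx_map empty_cpx K u \<and> cpx_map (cpx_simplex n) L v \<and>
       (\<forall>a\<in>cverts (empty_cpx :: nat cpx). p (u a) = v undefined)"
    then have v: "cpx_map (cpx_simplex n) L v" by blast
    have cv: "cverts (cpx_simplex n) = {0..n}" by (simp add: cpx_simplex_def cverts_def)
    have "v 0 \<in> cverts L" using v cv unfolding cpx_map_def by auto
    then have "v 0 \<in> p ` cverts K" by (rule vertex_in_img[OF K L fib we])
    then obtain x0 where x0: "x0 \<in> cverts K" "p x0 = v 0" by (metis imageE)
    have "{0..n} \<in> csimps (cpx_simplex n)" by (simp add: cpx_simplex_def csimps_def)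
    then have sig: "v ` {0..n} \<in> csimps L" using v unfolding cpx_map_def by blast
    have w: "v (min i n) \<in> v ` {0..n}" for i by auto
    obtain g where g: "g \<in> sset_set (Sing K) (Suc n)" "\<forall>i\<le>Suc n. p (g i) = v (min i n)"
      using lift_core[OF K L fib x0(1) sig, of "\<lambda>i. v (min i n)" "Suc n"] x0 w by auto
    have gm: "cpx_map (cpx_simplex (Suc n)) K g" using g(1) unfolding Sing_mem by blast
    have "cpx_map (cpx_simplex n) K g"
      unfolding cpx_map_def
    proof (intro conjI ballI)
      fix i assume "i \<in> cverts (cpx_simplex n)"
      then have "i \<in> cverts (cpx_simplex (Suc n))" by (simp add: cpx_simplex_def cverts_def)
      then show "g i \<in> cverts K" using gm unfolding cpx_map_def by blast
    next
      fix s assume "s \<in> csimps (cpx_simplex n)"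
      then have "s \<in> csimps (cpx_simplex (Suc n))" by (auto simp: cpx_simplex_def csimps_def)
      then show "g ` s \<in> csimps K" using gm unfolding cpx_map_def by blast
    qed
    moreover have "\<forall>b\<in>cverts (cpx_simplex n). p (g b) = v b" using g(2) cv by auto
    ultimately show "\<exists>h. cpx_map (cpx_simplex n) K h \<and>
              (\<forall>a\<in>cverts (empty_cpx :: nat cpx). h undefined = u a) \<and>
              (\<forall>b\<in>cverts (cpx_simplex n). p (h b) = v b)"
      by (auto simp: empty_cpx_def cverts_def)
  qed
qed

end
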